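(* Let $k_1<\tfrac12$. Let $J'=(z_w,z_w')$ be a nonempty open interval, let $r:J'\to\mathbb{R}$ be differentiable, and let $h:J'\to\mathbb{R}$ be differentiable with $\dot h(z)=1+h(z)^2-2r(z)h(z)$ on $J'$, having exactly one zero $z_*\in J'$. Let $G(z)=z-\dfrac{2h(z)}{2+h(z)^2-2r(z)h(z)}$ and $z_{n+1}=G(z_n)$. (1) If $r(z)>0$ and $\dot r(z)<k_1$ for all $z\in(z_w,z_* )$, then for every $z_0\in(z_w,z_* )$ the iterates are well defined and $(z_n)$ increases monotonically to $z_*$. (2) If $r(z)<0$ and $\dot r(z)<k_1$ for all $z\in(z_*,z_w')$, then for every $z_0\in(z_*,z_w')$ the iterates are well defined and $(z_n)$ decreases monotonically to $z_*$.
   Context: $\dot{}$ denotes differentiation with respect to $z$. Here $h<0$ on $(z_w,z_* )$ and $h>0$ on $(z_*,z_w')$. *)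

theory Defs
  imports "HOL-Analysis.Analysis"
begin

definition newtonG :: "(real \<Rightarrow> real) \<Rightarrow> (real \<Rightarrow> real) \<Rightarrow> real \<Rightarrow> real" where
  "newtonG h r z = z - 2 * h z / (2 + (h z)^2 - 2 * r z * h z)"

end

theory Submission
  imports Defs
begin

lemma G_deriv:
  fixes h r :: "real \<Rightarrow> real"
  assumes hd: "(h has_real_derivative (1 + (h z)^2 - 2*r z*h z)) (at z)"
    and rd: "(r has_real_derivative c) (at z)"
    and D: "2 + (h z)^2 - 2*r z*h z \<noteq> 0"
  shows "(newtonG h r has_real_derivative
     (((h z)^2 - 2*r z*h z)^2 + 2*((h z)^2 - 2*r z*h z)*(h z)^2 + (h z)^2*(2-4*c))
       / (2 + (h z)^2 - 2*r z*h z)^2) (at z)"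
proof -
  define a where "a = h z"
  define b where "b = r z"
  define p where "p = 1 + a^2 - 2*b*a"
  define Dd where "Dd = 2*a*p - 2*(c*a + b*p)"
  have hd': "(h has_real_derivative p) (at z)" using hd by (simp add: p_def a_def b_def)
  have Dder: "((\<lambda>w. 2 + (h w)^2 - 2 * r w * h w) has_real_derivative Dd) (at z)"
    unfolding Dd_def a_def b_def
    by (auto intro!: derivative_eq_intros hd' rd simp: algebra_simps)
  have D': "2 + a^2 - 2*b*a \<noteq> 0" using D by (simp add: a_def b_def)
  have q: "((\<lambda>w. 2 * h w / (2 + (h w)^2 - 2 * r w * h w)) has_real_derivative
      ((2*p) * (2 + a^2 - 2*b*a) - 2*a*Dd) / ((2 + a^2 - 2*b*a) * (2 + a^2 - 2*b*a))) (at z)"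
    using DERIV_divide[OF DERIV_cmult[OF hd', of 2] Dder] D' unfolding a_def b_def by simp
  have "((\<lambda>w. w - 2 * h w / (2 + (h w)^2 - 2 * r w * h w)) has_real_derivative
      1 - (2*p*(2 + a^2 - 2*b*a) - 2*a*Dd) / (2 + a^2 - 2*b*a)^2) (at z)"
    using DERIV_diff[OF DERIV_ident q] by (simp add: power2_eq_square)
  moreover have "1 - (2*p*(2 + a^2 - 2*b*a) - 2*a*Dd) / (2 + a^2 - 2*b*a)^2
     = ((a^2 - 2*b*a)^2 + 2*(a^2 - 2*b*a)*a^2 + a^2*(2-4*c)) / (2 + a^2 - 2*b*a)^2"
    using D' unfolding p_def Dd_def by (simp add: field_simps) (simp add: algebra_simps power2_eq_square eval_nat_numeral)
  ultimately show ?thesis unfolding newtonG_def[abs_def] a_def b_def by simp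
qed

theorem theorem3p6:
  fixes k1 zw zw' zs :: real and r h :: "real \<Rightarrow> real"
  assumes k1: "k1 < 1/2"
    and J: "zw < zw'"
    and r_diff: "\<forall>z\<in>{zw<..<zw'}. r differentiable (at z)"
    and h_ode: "\<forall>z\<in>{zw<..<zw'}.
                  (h has_real_derivative (1 + (h z)^2 - 2 * r z * h z)) (at z)"
    and zs_in: "zs \<in> {zw<..<zw'}" and h_zs: "h zs = 0"
    and zs_unique: "\<forall>z\<in>{zw<..<zw'}. h z = 0 \<longrightarrow> z = zs"
  shows
    "((\<forall>z\<in>{zw<..<zs}. r z > 0 \<and> deriv r z < k1) \<longrightarrow>
       (\<forall>z0\<in>{zw<..<zs}.
          (\<forall>n. ((newtonG h r) ^^ n) z0 \<in> {zw<..<zw'} \<and>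
               2 + (h (((newtonG h r) ^^ n) z0))^2
                 - 2 * r (((newtonG h r) ^^ n) z0) * h (((newtonG h r) ^^ n) z0) \<noteq> 0) \<and>
          incseq (\<lambda>n. ((newtonG h r) ^^ n) z0) \<and>
          (\<lambda>n. ((newtonG h r) ^^ n) z0) \<longlonglongrightarrow> zs))
     \<and>
     ((\<forall>z\<in>{zs<..<zw'}. r z < 0 \<and> deriv r z < k1) \<longrightarrow>
       (\<forall>z0\<in>{zs<..<zw'}.
          (\<forall>n. ((newtonG h r) ^^ n) z0 \<in> {zw<..<zw'} \<and>
               2 + (h (((newtonG h r) ^^ n) z0))^2
                 - 2 * r (((newtonG h r) ^^ n) z0) * h (((newtonG h r) ^^ n) z0) \<noteq> 0) \<and>
          decseq (\<lambda>n. ((newtonG h r) ^^ n) z0) \<and>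
          (\<lambda>n. ((newtonG h r) ^^ n) z0) \<longlonglongrightarrow> zs))"
proof -
  let ?I = "{zw<..<zw'}"
  let ?F = "newtonG h r"
  define D where "D = (\<lambda>z. 2 + (h z)^2 - 2 * r z * h z)"
  have hd: "\<And>z. z \<in> ?I \<Longrightarrow> (h has_real_derivative (1 + (h z)^2 - 2 * r z * h z)) (at z)"
    using h_ode by blast
  have rd: "\<And>z. z \<in> ?I \<Longrightarrow> (r has_real_derivative deriv r z) (at z)"
    using r_diff DERIV_deriv_iff_real_differentiable by blast
  have hc: "\<And>z. z \<in> ?I \<Longrightarrow> isCont h z" using hd DERIV_isCont by blast
  have Fder: "\<And>z. z \<in> ?I \<Longrightarrow> D z \<noteq> 0 \<Longrightarrow> (?F has_real_derivative
     (((h z)^2 - 2*r z*h z)^2 + 2*((h z)^2 - 2*r z*h z)*(h z)^2 + (h z)^2*(2-4*deriv r z))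
       / (2 + (h z)^2 - 2*r z*h z)^2) (at z)"
    using G_deriv hd rd unfolding D_def by blast
  have Fc: "\<And>z. z \<in> ?I \<Longrightarrow> D z \<noteq> 0 \<Longrightarrow> isCont ?F z" using Fder DERIV_isCont by blast
  have Fpos: "\<exists>y. (?F has_real_derivative y) (at z) \<and> y > 0"
    if z: "z \<in> ?I" "h z \<noteq> 0" "r z * h z \<le> 0" "deriv r z < 1/2" for z
  proof -
    have D: "D z > 0" using z(3) zero_le_power2[of "h z"] unfolding D_def by (simp only: mult.assoc; linarith)
    have s: "(h z)^2 - 2*r z*h z \<ge> 0" using z(3) zero_le_power2[of "h z"] by (simp only: mult.assoc; linarith)
    have "(h z)^2 > 0" using z(2) by simp
    moreover have "2 - 4 * deriv r z > 0" using z(4) by simp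
    ultimately have "(h z)^2*(2-4*deriv r z) > 0" by simp
    moreover have "((h z)^2 - 2*r z*h z)^2 + 2*((h z)^2 - 2*r z*h z)*(h z)^2 \<ge> 0"
      using s by (intro add_nonneg_nonneg mult_nonneg_nonneg) auto
    ultimately have N: "((h z)^2 - 2*r z*h z)^2 + 2*((h z)^2 - 2*r z*h z)*(h z)^2 + (h z)^2*(2-4*deriv r z) > 0"
      by linarith
    have P: "(2 + (h z)^2 - 2*r z*h z)^2 > 0" using D unfolding D_def by simp
    have Fd: "(?F has_real_derivative
     (((h z)^2 - 2*r z*h z)^2 + 2*((h z)^2 - 2*r z*h z)*(h z)^2 + (h z)^2*(2-4*deriv r z))
       / (2 + (h z)^2 - 2*r z*h z)^2) (at z)" using Fder[OF z(1)] D by simp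
    show ?thesis using Fd divide_pos_pos[OF N P] by blast
  qed
  have hzs1: "(h has_real_derivative 1) (at zs)" using hd[OF zs_in] h_zs by simp
  have hcont_on: "continuous_on {a..b} h" if "zw < a" "b < zw'" for a b
    using that by (intro continuous_at_imp_continuous_on ballI hc) auto
  have Fcont_on: "continuous_on {a..b} ?F" if "zw < a" "b < zw'" "\<forall>w\<in>{a..b}. D w \<noteq> 0" for a b
    using that by (intro continuous_at_imp_continuous_on ballI Fc) auto
  have Fzs: "?F zs = zs" using h_zs by (simp add: newtonG_def)
  have hneg: "\<forall>z\<in>{zw<..<zs}. h z < 0"
  proof
    fix z assume z: "z \<in> {zw<..<zs}"
    show "h z < 0"
    proof (rule ccontr)
      assume "\<not> h z < 0"
      hence hz: "h z \<ge> 0" by simp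
      obtain d where d: "d > 0" "\<forall>t>0. t < d \<longrightarrow> h (zs - t) < h zs"
        using DERIV_pos_inc_left[OF hzs1] by auto
      define t where "t = min (d/2) ((zs - z)/2)"
      have t: "t > 0" "t < d" "t \<le> (zs - z)/2" using d z unfolding t_def by (auto simp: min_def)
      have ht: "h (zs - t) < 0" using d t h_zs by auto
      obtain x where x: "z \<le> x" "x \<le> zs - t" "h x = 0"
        using IVT2'[of h "zs - t" 0 z] hz ht t z zs_in hcont_on[of z "zs - t"] by auto
      then have "x = zs" using zs_unique z zs_in t by auto
      then show False using x t by auto
    qed
  qed
  have hpos: "\<forall>z\<in>{zs<..<zw'}. h z > 0"
  proof
    fix z assume z: "z \<in> {zs<..<zw'}"
    show "h z > 0"
    proof (rule ccontr)
      assume "\<not> h z > 0"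
      hence hz: "h z \<le> 0" by simp
      obtain d where d: "d > 0" "\<forall>t>0. t < d \<longrightarrow> h zs < h (zs + t)"
        using DERIV_pos_inc_right[OF hzs1] by auto
      define t where "t = min (d/2) ((z - zs)/2)"
      have t: "t > 0" "t < d" "t \<le> (z - zs)/2" using d z unfolding t_def by (auto simp: min_def)
      have ht: "h (zs + t) > 0" using d t h_zs by auto
      obtain x where x: "zs + t \<le> x" "x \<le> z" "h x = 0"
        using IVT2'[of h z 0 "zs + t"] hz ht t z zs_in hcont_on[of "zs + t" z] by auto
      then have "x = zs" using zs_unique z zs_in t by auto
      then show False using x t by auto
    qed
  qed
  have conv: "x \<longlonglongrightarrow> zs" if xs: "\<And>n. x (Suc n) = ?F (x n)" and xl: "x \<longlonglongrightarrow> L"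
    and L: "L \<in> ?I" "D L \<noteq> 0" for x L
  proof -
    have "(\<lambda>n. ?F (x n)) \<longlonglongrightarrow> ?F L" using isCont_tendsto_compose[OF Fc[OF L] xl] .
    moreover have "(\<lambda>n. ?F (x n)) \<longlonglongrightarrow> L" using LIMSEQ_Suc[OF xl] xs by simp
    ultimately have "?F L = L" using LIMSEQ_unique by blast
    hence "2 * h L / D L = 0" unfolding newtonG_def D_def by simp
    hence "h L = 0" using L by simp
    hence "L = zs" using zs_unique L by auto
    thus ?thesis using xl by simp
  qed
  show ?thesis
  proof (rule conjI; intro impI ballI)
    assume A: "\<forall>z\<in>{zw<..<zs}. r z > 0 \<and> deriv r z < k1"
    have Dpos: "D z > 0" if "z \<in> {zw<..zs}" for z
    proof (cases "z = zs")
      case True then show ?thesis using h_zs by (simp add: D_def)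
    next
      case False
      then have "h z < 0" "r z > 0" using hneg A that by auto
      then have "r z * h z < 0" by (simp add: mult_pos_neg)
      then show ?thesis using zero_le_power2[of "h z"] unfolding D_def by (simp only: mult.assoc; linarith)
    qed
    have step: "z < ?F z \<and> ?F z < zs" if z: "z \<in> {zw<..<zs}" for z
    proof
      have "h z < 0" "D z > 0" using hneg Dpos z by auto
      then have "2 * h z / D z < 0" by (simp add: divide_neg_pos)
      then show "z < ?F z" unfolding newtonG_def D_def by simp
      have "?F z < ?F zs"
      proof (rule DERIV_pos_imp_increasing_open[where f="newtonG h r"])
        show "z < zs" using z by simp
        show "\<exists>y. (?F has_real_derivative y) (at x) \<and> y > 0" if "z < x" "x < zs" for x
        proof -
          have x: "x \<in> {zw<..<zs}" using that z by auto
          have "h x < 0" "r x > 0" "deriv r x < k1" using x hneg A by auto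
          then show ?thesis using x zs_in k1 by (intro Fpos) (auto intro: less_imp_le simp: mult_pos_neg)
        qed
        show "continuous_on {z..zs} ?F" using z zs_in Dpos
          by (intro Fcont_on) (auto simp: less_imp_neq[symmetric] intro!: less_imp_neq[symmetric])
      qed
      then show "?F z < zs" using Fzs by simp
    qed
    fix z0 assume z0: "z0 \<in> {zw<..<zs}"
    define x where "x = (\<lambda>n. (?F ^^ n) z0)"
    have xs: "\<And>n. x (Suc n) = ?F (x n)" unfolding x_def by simp
    have xin: "x n \<in> {zw<..<zs}" for n
    proof (induction n)
      case 0 then show ?case using z0 by (simp add: x_def)
    next
      case (Suc n) then show ?case using step[OF Suc] xs[of n] by auto
    qed
    have inc: "incseq x" using xin step xs by (intro incseq_SucI) (simp add: less_imp_le)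
    have bdd: "bdd_above (range x)" using xin by (intro bdd_aboveI[of _ zs]) (auto intro: less_imp_le)
    define L where "L = (SUP i. x i)"
    have xl: "x \<longlonglongrightarrow> L" unfolding L_def by (rule LIMSEQ_incseq_SUP[OF bdd inc])
    have "L \<le> zs" unfolding L_def using xin by (intro cSUP_least) (auto intro: less_imp_le)
    moreover have "x 0 \<le> L" unfolding L_def using bdd by (intro cSUP_upper) auto
    ultimately have LI: "L \<in> {zw<..zs}" using xin[of 0] by auto
    then have L: "L \<in> ?I" "D L \<noteq> 0" using Dpos zs_in by (auto simp: less_imp_neq[symmetric])
    show "(\<forall>n. ((newtonG h r) ^^ n) z0 \<in> {zw<..<zw'} \<and>
               2 + (h (((newtonG h r) ^^ n) z0))^2
                 - 2 * r (((newtonG h r) ^^ n) z0) * h (((newtonG h r) ^^ n) z0) \<noteq> 0) \<and>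
          incseq (\<lambda>n. ((newtonG h r) ^^ n) z0) \<and>
          (\<lambda>n. ((newtonG h r) ^^ n) z0) \<longlonglongrightarrow> zs"
    proof (intro conjI allI)
      fix n
      show "(?F ^^ n) z0 \<in> ?I" using xin[of n] zs_in unfolding x_def by auto
      show "2 + (h ((?F ^^ n) z0))^2 - 2 * r ((?F ^^ n) z0) * h ((?F ^^ n) z0) \<noteq> 0"
        using Dpos[of "x n"] xin[of n] unfolding x_def D_def by auto
    next
      show "incseq (\<lambda>n. (?F ^^ n) z0)" using inc unfolding x_def .
      show "(\<lambda>n. (?F ^^ n) z0) \<longlonglongrightarrow> zs" using conv[OF xs xl L] unfolding x_def .
    qed
  next
    assume A: "\<forall>z\<in>{zs<..<zw'}. r z < 0 \<and> deriv r z < k1"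
    have Dpos: "D z > 0" if "z \<in> {zs..<zw'}" for z
    proof (cases "z = zs")
      case True then show ?thesis using h_zs by (simp add: D_def)
    next
      case False
      then have "h z > 0" "r z < 0" using hpos A that by auto
      then have "r z * h z < 0" by (simp add: mult_neg_pos)
      then show ?thesis using zero_le_power2[of "h z"] unfolding D_def by (simp only: mult.assoc; linarith)
    qed
    have step: "zs < ?F z \<and> ?F z < z" if z: "z \<in> {zs<..<zw'}" for z
    proof
      have "h z > 0" "D z > 0" using hpos Dpos z by auto
      then have "2 * h z / D z > 0" by simp
      then show "?F z < z" unfolding newtonG_def D_def by simp
      have "?F zs < ?F z"
      proof (rule DERIV_pos_imp_increasing_open[where f="newtonG h r"])
        show "zs < z" using z by simp
        show "\<exists>y. (?F has_real_derivative y) (at x) \<and> y > 0" if "zs < x" "x < z" for x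
        proof -
          have x: "x \<in> {zs<..<zw'}" using that z by auto
          have "h x > 0" "r x < 0" "deriv r x < k1" using x hpos A by auto
          then show ?thesis using x zs_in k1 by (intro Fpos) (auto intro: less_imp_le simp: mult_neg_pos)
        qed
        show "continuous_on {zs..z} ?F" using z zs_in Dpos
          by (intro Fcont_on) (auto simp: less_imp_neq[symmetric] intro!: less_imp_neq[symmetric])
      qed
      then show "zs < ?F z" using Fzs by simp
    qed
    fix z0 assume z0: "z0 \<in> {zs<..<zw'}"
    define x where "x = (\<lambda>n. (?F ^^ n) z0)"
    have xs: "\<And>n. x (Suc n) = ?F (x n)" unfolding x_def by simp
    have xin: "x n \<in> {zs<..<zw'}" for n
    proof (induction n)
      case 0 then show ?case using z0 by (simp add: x_def)
    next
      case (Suc n) then show ?case using step[OF Suc] xs[of n] by auto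
    qed
    have dec: "decseq x" using xin step xs by (intro decseq_SucI) (simp add: less_imp_le)
    have bdd: "bdd_below (range x)" using xin by (intro bdd_belowI[of _ zs]) (auto intro: less_imp_le)
    define L where "L = (INF i. x i)"
    have xl: "x \<longlonglongrightarrow> L" unfolding L_def by (rule LIMSEQ_decseq_INF[OF bdd dec])
    have "zs \<le> L" unfolding L_def using xin by (intro cINF_greatest) (auto intro: less_imp_le)
    moreover have "L \<le> x 0" unfolding L_def using bdd by (intro cINF_lower) auto
    ultimately have LI: "L \<in> {zs..<zw'}" using xin[of 0] by auto
    then have L: "L \<in> ?I" "D L \<noteq> 0" using Dpos zs_in by (auto simp: less_imp_neq[symmetric])
    show "(\<forall>n. ((newtonG h r) ^^ n) z0 \<in> {zw<..<zw'} \<and>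
               2 + (h (((newtonG h r) ^^ n) z0))^2
                 - 2 * r (((newtonG h r) ^^ n) z0) * h (((newtonG h r) ^^ n) z0) \<noteq> 0) \<and>
          decseq (\<lambda>n. ((newtonG h r) ^^ n) z0) \<and>
          (\<lambda>n. ((newtonG h r) ^^ n) z0) \<longlonglongrightarrow> zs"
    proof (intro conjI allI)
      fix n
      show "(?F ^^ n) z0 \<in> ?I" using xin[of n] zs_in unfolding x_def by auto
      show "2 + (h ((?F ^^ n) z0))^2 - 2 * r ((?F ^^ n) z0) * h ((?F ^^ n) z0) \<noteq> 0"
        using Dpos[of "x n"] xin[of n] unfolding x_def D_def by auto
    next
      show "decseq (\<lambda>n. (?F ^^ n) z0)" using dec unfolding x_def .
      show "(\<lambda>n. (?F ^^ n) z0) \<longlonglongrightarrow> zs" using conv[OF xs xl L] unfolding x_def .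
    qed
  qed
qed

end
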